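(* Let $d\ge2$, $\varphi\in L^\infty(\mathbb{T}^d)$, and let $C$ be a conjugation on $H^2(\mathbb{D}^d)$. If $T_\varphi$ is $C$-symmetric, then $T_\varphi$ is $\bm{S}$-Toeplitz for $\bm{S}=(CM_{z_1}C,\dots,CM_{z_d}C)$, i.e. $(CM_{z_i}C)^*T_\varphi(CM_{z_i}C)=T_\varphi$ for all $i=1,\dots,d$.
   Context: A conjugation is an anti-linear, involutive, isometric map; $T$ is $C$-symmetric if $CT^*C=T$. $H^2(\mathbb{D}^d)$ is the Hardy space over the unit polydisc (as a closed subspace of $L^2(\mathbb{T}^d)$), $M_{z_i}$ is multiplication by the coordinate $z_i$, and $T_\varphi f=P_{H^2(\mathbb{D}^d)}(\varphi f)$ for $\varphi\in L^\infty(\mathbb{T}^d)$. *)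

theory Defs
  imports "HOL-Analysis.Analysis"
begin

text \<open>Model of the torus T^d: the unit cube [0,1]^d (coordinates t, z_j = exp(2 pi i t_j)),
  with Lebesgue measure (total mass 1 = normalized Haar measure on T^d).\<close>

definition torus_cube :: "(real^'d::finite) set" where
  "torus_cube = {t. \<forall>j. 0 \<le> t$j \<and> t$j \<le> 1}"

definition torus_measure :: "(real^'d::finite) measure" where
  "torus_measure = lebesgue_on torus_cube"

definition Linfty :: "((real^'d::finite) \<Rightarrow> complex) \<Rightarrow> bool" where
  "Linfty \<phi> \<longleftrightarrow> \<phi> \<in> borel_measurable torus_measure \<and>
     (\<exists>B. AE t in torus_measure. cmod (\<phi> t) \<le> B)"

definition fourier_coeff :: "((real^'d::finite) \<Rightarrow> complex) \<Rightarrow> int^'d \<Rightarrow> complex" where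
  "fourier_coeff \<phi> k = integral\<^sup>L torus_measure
     (\<lambda>t. \<phi> t * exp (- (2 * of_real pi * \<i>) * of_real (\<Sum>j\<in>UNIV. of_int (k$j) * t$j)))"

text \<open>H^2(D^d), identified (via the unitary Fourier transform) with the square-summable
  coefficient sequences indexed by N^d, i.e. the closed subspace of L^2(T^d) = l^2(Z^d)
  consisting of functions whose Fourier coefficients vanish off N^d.\<close>
definition hardy :: "((nat^'d::finite) \<Rightarrow> complex) set" where
  "hardy = {f. (\<lambda>n. (cmod (f n))\<^sup>2) summable_on UNIV}"

definition h2_inner :: "((nat^'d::finite) \<Rightarrow> complex) \<Rightarrow> ((nat^'d) \<Rightarrow> complex) \<Rightarrow> complex" where
  "h2_inner f g = (\<Sum>\<^sub>\<infinity>n. f n * cnj (g n))"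

definition h2_norm :: "((nat^'d::finite) \<Rightarrow> complex) \<Rightarrow> real" where
  "h2_norm f = sqrt (\<Sum>\<^sub>\<infinity>n. (cmod (f n))\<^sup>2)"

text \<open>Multiplication by the coordinate z_i on H^2: shifts coefficients by e_i.\<close>
definition mult_z :: "'d::finite \<Rightarrow> ((nat^'d) \<Rightarrow> complex) \<Rightarrow> ((nat^'d) \<Rightarrow> complex)" where
  "mult_z i f = (\<lambda>n. if n$i = 0 then 0 else f (\<chi> j. if j = i then n$j - 1 else n$j))"

text \<open>Toeplitz operator T_phi f = P_{H^2}(phi f): the n-th coefficient (n in N^d) of phi f
  is sum over m of phi^(n - m) f^(m).\<close>
definition toeplitz :: "((real^'d::finite) \<Rightarrow> complex) \<Rightarrow> ((nat^'d) \<Rightarrow> complex) \<Rightarrow> ((nat^'d) \<Rightarrow> complex)" where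
  "toeplitz \<phi> f = (\<lambda>n. \<Sum>\<^sub>\<infinity>m. fourier_coeff \<phi> (\<chi> j. int (n$j) - int (m$j)) * f m)"

definition conjugation :: "(((nat^'d::finite) \<Rightarrow> complex) \<Rightarrow> ((nat^'d) \<Rightarrow> complex)) \<Rightarrow> bool" where
  "conjugation C \<longleftrightarrow>
     (\<forall>f\<in>hardy. C f \<in> hardy) \<and>
     (\<forall>f\<in>hardy. \<forall>g\<in>hardy. C (\<lambda>n. f n + g n) = (\<lambda>n. C f n + C g n)) \<and>
     (\<forall>f\<in>hardy. \<forall>c. C (\<lambda>n. c * f n) = (\<lambda>n. cnj c * C f n)) \<and>
     (\<forall>f\<in>hardy. C (C f) = f) \<and>
     (\<forall>f\<in>hardy. h2_norm (C f) = h2_norm f)"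

definition is_adjoint :: "(((nat^'d::finite) \<Rightarrow> complex) \<Rightarrow> ((nat^'d) \<Rightarrow> complex)) \<Rightarrow>
    (((nat^'d) \<Rightarrow> complex) \<Rightarrow> ((nat^'d) \<Rightarrow> complex)) \<Rightarrow> bool" where
  "is_adjoint A B \<longleftrightarrow> (\<forall>f\<in>hardy. A f \<in> hardy) \<and> (\<forall>f\<in>hardy. B f \<in> hardy) \<and>
     (\<forall>f\<in>hardy. \<forall>g\<in>hardy. h2_inner (A f) g = h2_inner f (B g))"

definition C_symmetric :: "(((nat^'d::finite) \<Rightarrow> complex) \<Rightarrow> ((nat^'d) \<Rightarrow> complex)) \<Rightarrow>
    (((nat^'d) \<Rightarrow> complex) \<Rightarrow> ((nat^'d) \<Rightarrow> complex)) \<Rightarrow> bool" where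
  "C_symmetric C T \<longleftrightarrow> (\<exists>T'. is_adjoint T T' \<and> (\<forall>f\<in>hardy. C (T' (C f)) = T f))"

end

theory Submission
  imports Defs
begin

lemma ab_le: "(a::real)\<ge>0 \<Longrightarrow> b \<ge> 0 \<Longrightarrow> a*b \<le> a\<^sup>2+b\<^sup>2"
  using sum_squares_bound[of a b] mult_nonneg_nonneg[of a b] by linarith

lemma sq_sum_le: "((x::real) + y)\<^sup>2 \<le> 2 * x\<^sup>2 + 2 * y\<^sup>2"
  using sum_squares_bound[of x y] unfolding power2_sum by linarith

lemma hardy_iff: "f \<in> hardy \<longleftrightarrow> (\<lambda>n. (cmod (f n))\<^sup>2) summable_on UNIV"
  by (simp add: hardy_def)

lemma inner_summable:
  assumes "f \<in> hardy" "g \<in> hardy"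
  shows "(\<lambda>n. f n * cnj (g n)) summable_on UNIV"
proof -
  have s: "(\<lambda>n. (cmod (f n))\<^sup>2 + (cmod (g n))\<^sup>2) summable_on UNIV"
    using assms by (intro summable_on_add) (auto simp: hardy_iff)
  hence "(\<lambda>n. norm ((cmod (f n))\<^sup>2 + (cmod (g n))\<^sup>2)) summable_on UNIV"
    by (simp only: real_norm_def abs_of_nonneg add_nonneg_nonneg zero_le_power2)
  hence "(\<lambda>n. norm (f n * cnj (g n))) summable_on UNIV"
  proof (rule Infinite_Sum.abs_summable_on_comparison_test)
    fix n
    have "cmod (f n) * cmod (g n) \<le> (cmod (f n))\<^sup>2 + (cmod (g n))\<^sup>2"
      by (rule ab_le) auto
    thus "norm (f n * cnj (g n)) \<le> norm ((cmod (f n))\<^sup>2 + (cmod (g n))\<^sup>2)"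
      by (simp add: norm_mult)
  qed
  thus ?thesis using summable_on_iff_abs_summable_on_complex by blast
qed

lemma hardy_add:
  assumes "f \<in> hardy" "g \<in> hardy"
  shows "(\<lambda>n. f n + g n) \<in> hardy"
proof -
  have s: "(\<lambda>n. 2 * (cmod (f n))\<^sup>2 + 2 * (cmod (g n))\<^sup>2) summable_on UNIV"
    using assms by (intro summable_on_add summable_on_cmult_right) (auto simp: hardy_iff)
  show ?thesis unfolding hardy_iff
  proof (rule summable_on_comparison_test[OF s])
    fix n
    have "cmod (f n + g n) \<le> cmod (f n) + cmod (g n)" by (rule norm_triangle_ineq)
    hence "(cmod (f n + g n))\<^sup>2 \<le> (cmod (f n) + cmod (g n))\<^sup>2"
      by (simp add: power_mono)
    also have "\<dots> \<le> 2 * (cmod (f n))\<^sup>2 + 2 * (cmod (g n))\<^sup>2"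
      by (rule sq_sum_le)
    finally show "(cmod (f n + g n))\<^sup>2 \<le> 2 * (cmod (f n))\<^sup>2 + 2 * (cmod (g n))\<^sup>2" .
  qed simp
qed

lemma hardy_cmult:
  assumes "f \<in> hardy"
  shows "(\<lambda>n. c * f n) \<in> hardy"
  using summable_on_cmult_right[of "\<lambda>n. (cmod (f n))\<^sup>2" UNIV "(cmod c)\<^sup>2"] assms
  by (simp add: hardy_iff norm_mult power_mult_distrib)

lemma norm_sq: "(h2_norm f)\<^sup>2 = (\<Sum>\<^sub>\<infinity>n. (cmod (f n))\<^sup>2)"
  unfolding h2_norm_def by (simp add: infsum_nonneg)

lemma norm_sq_add:
  assumes "f \<in> hardy" "g \<in> hardy"
  shows "(h2_norm (\<lambda>n. f n + g n))\<^sup>2 = (h2_norm f)\<^sup>2 + (h2_norm g)\<^sup>2 + 2 * Re (h2_inner f g)"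
proof -
  have pw: "(cmod (f n + g n))\<^sup>2 = ((cmod (f n))\<^sup>2 + (cmod (g n))\<^sup>2) + 2 * Re (f n * cnj (g n))" for n
    by (simp only: cmod_power2 plus_complex.sel) (simp add: power2_sum)
  have s1: "(\<lambda>n. (cmod (f n))\<^sup>2) summable_on UNIV" "(\<lambda>n. (cmod (g n))\<^sup>2) summable_on UNIV"
    using assms by (auto simp: hardy_iff)
  have s2: "(\<lambda>n. Re (f n * cnj (g n))) summable_on UNIV"
    by (rule summable_on_Re[OF inner_summable[OF assms]])
  have "(\<Sum>\<^sub>\<infinity>n. (cmod (f n + g n))\<^sup>2) = (\<Sum>\<^sub>\<infinity>n. ((cmod (f n))\<^sup>2 + (cmod (g n))\<^sup>2) + 2 * Re (f n * cnj (g n)))"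
    by (simp add: pw)
  also have "\<dots> = (\<Sum>\<^sub>\<infinity>n. (cmod (f n))\<^sup>2 + (cmod (g n))\<^sup>2) + (\<Sum>\<^sub>\<infinity>n. 2 * Re (f n * cnj (g n)))"
    by (rule infsum_add[OF summable_on_add[OF s1] summable_on_cmult_right[OF s2]])
  also have "\<dots> = (\<Sum>\<^sub>\<infinity>n. (cmod (f n))\<^sup>2) + (\<Sum>\<^sub>\<infinity>n. (cmod (g n))\<^sup>2) + 2 * (\<Sum>\<^sub>\<infinity>n. Re (f n * cnj (g n)))"
    by (simp only: infsum_add[OF s1] infsum_cmult_right')
  also have "(\<Sum>\<^sub>\<infinity>n. Re (f n * cnj (g n))) = Re (h2_inner f g)"
    unfolding h2_inner_def by (rule infsum_Re[OF inner_summable[OF assms]])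
  finally show ?thesis by (simp add: norm_sq)
qed

lemma inner_cmult: "h2_inner (\<lambda>n. c * f n) g = c * h2_inner f g"
  unfolding h2_inner_def by (simp add: mult.assoc infsum_cmult_right')

lemma inner_sym: "h2_inner f g = cnj (h2_inner g f)"
  unfolding h2_inner_def by (simp flip: infsum_cnj add: mult.commute)

lemma conj_re:
  assumes C: "conjugation C" and x: "x \<in> hardy" and y: "y \<in> hardy"
  shows "Re (h2_inner (C x) (C y)) = Re (h2_inner x y)"
proof -
  have Cx: "C x \<in> hardy" and Cy: "C y \<in> hardy" using C x y by (auto simp: conjugation_def)
  have "h2_norm (C (\<lambda>n. x n + y n)) = h2_norm (\<lambda>n. x n + y n)"
    using C hardy_add[OF x y] by (auto simp: conjugation_def)
  moreover have "C (\<lambda>n. x n + y n) = (\<lambda>n. C x n + C y n)" using C x y by (auto simp: conjugation_def)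
  moreover have "h2_norm (C x) = h2_norm x" "h2_norm (C y) = h2_norm y"
    using C x y by (auto simp: conjugation_def)
  ultimately show ?thesis
    using norm_sq_add[OF x y] norm_sq_add[OF Cx Cy] by simp
qed

lemma conj_inner:
  assumes C: "conjugation C" and x: "x \<in> hardy" and y: "y \<in> hardy"
  shows "h2_inner (C x) (C y) = h2_inner y x"
proof -
  have r: "Re (h2_inner (C x) (C y)) = Re (h2_inner x y)" by (rule conj_re[OF C x y])
  have ix: "(\<lambda>n. \<i> * x n) \<in> hardy" by (rule hardy_cmult[OF x])
  have "C (\<lambda>n. \<i> * x n) = (\<lambda>n. - \<i> * C x n)" using C x by (auto simp: conjugation_def)
  hence "Re (h2_inner (\<lambda>n. - \<i> * C x n) (C y)) = Re (h2_inner (\<lambda>n. \<i> * x n) y)"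
    using conj_re[OF C ix y] by simp
  hence i: "Im (h2_inner (C x) (C y)) = - Im (h2_inner x y)"
    by (simp only: inner_cmult) simp
  have "h2_inner (C x) (C y) = cnj (h2_inner x y)"
    using r i by (simp add: complex_eq_iff)
  thus ?thesis by (metis inner_sym)
qed


definition sh :: "'d::finite \<Rightarrow> nat^'d \<Rightarrow> nat^'d" where
  "sh i n = (\<chi> j. if j = i then n$j + 1 else n$j)"

definition bsh :: "'d::finite \<Rightarrow> ((nat^'d) \<Rightarrow> complex) \<Rightarrow> ((nat^'d) \<Rightarrow> complex)" where
  "bsh i g = (\<lambda>n. g (sh i n))"

lemma inj_sh: "inj (sh i)"
  by (auto simp: inj_def sh_def vec_eq_iff split: if_splits)

lemma range_sh: fixes i :: "'d::finite" shows "range (sh i) = {m. m$i \<noteq> 0}"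
proof (intro set_eqI iffI)
  fix m :: "nat^'d" assume "m \<in> {m::nat^'d. m$i \<noteq> 0}"
  hence "m = sh i (\<chi> j. if j = i then m$j - 1 else m$j)"
    by (auto simp: sh_def vec_eq_iff)
  thus "m \<in> range (sh i)" by blast
qed (auto simp: sh_def)

lemma mult_z_sh: "mult_z i f (sh i n) = f n"
proof -
  have 1: "(\<chi> j. if j = i then sh i n $ j - 1 else sh i n $ j) = n"
    by (simp add: sh_def vec_eq_iff)
  have 2: "sh i n $ i \<noteq> 0" by (simp add: sh_def)
  show ?thesis unfolding mult_z_def using 1 2 by simp
qed

lemma mult_z_0: "m$i = 0 \<Longrightarrow> mult_z i f m = 0"
  by (simp add: mult_z_def)

lemma infsum_sh:
  assumes "\<And>m. m$i = 0 \<Longrightarrow> F m = 0"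
  shows "infsum F UNIV = infsum (\<lambda>n. F (sh i n)) UNIV"
proof -
  have "infsum F UNIV = infsum F (range (sh i))"
    by (rule infsum_cong_neutral) (use assms in \<open>auto simp: range_sh\<close>)
  also have "\<dots> = infsum (F \<circ> sh i) UNIV"
    by (rule infsum_reindex) (simp add: inj_sh)
  finally show ?thesis by (simp add: o_def)
qed

lemma summable_sh:
  assumes "\<And>m. m$i = 0 \<Longrightarrow> F m = 0"
  shows "F summable_on UNIV \<longleftrightarrow> (\<lambda>n. F (sh i n)) summable_on UNIV"
proof -
  have "F summable_on UNIV \<longleftrightarrow> F summable_on (range (sh i))"
    by (rule summable_on_cong_neutral) (use assms in \<open>auto simp: range_sh\<close>)
  also have "\<dots> \<longleftrightarrow> (F \<circ> sh i) summable_on UNIV"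
    by (rule summable_on_reindex) (simp add: inj_sh)
  finally show ?thesis by (simp add: o_def)
qed

lemma inner_shift: "h2_inner (bsh i u) h = h2_inner u (mult_z i h)"
  unfolding h2_inner_def bsh_def
  by (subst infsum_sh[of i]) (auto simp: mult_z_0 mult_z_sh)

lemma toeplitz_shift: "bsh i (toeplitz \<phi> (mult_z i f)) = toeplitz \<phi> f"
proof (rule ext)
  fix n
  have e: "(\<chi> j. int (sh i n $ j) - int (sh i k $ j)) = (\<chi> j. int (n $ j) - int (k $ j))" for k
    by (auto simp: sh_def vec_eq_iff)
  show "bsh i (toeplitz \<phi> (mult_z i f)) n = toeplitz \<phi> f n"
    unfolding bsh_def toeplitz_def
    by (subst infsum_sh[of i]) (auto simp: mult_z_0 mult_z_sh e)
qed

lemma hardy_mult_z: "f \<in> hardy \<Longrightarrow> mult_z i f \<in> hardy"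
  unfolding hardy_iff
  by (subst summable_sh[of i]) (auto simp: mult_z_0 mult_z_sh)

lemma hardy_bsh:
  assumes "u \<in> hardy" shows "bsh i u \<in> hardy"
proof -
  have "(\<lambda>n. (cmod (u n))\<^sup>2) summable_on range (sh i)"
    by (rule summable_on_subset[of _ UNIV]) (use assms in \<open>auto simp: hardy_iff\<close>)
  hence "((\<lambda>n. (cmod (u n))\<^sup>2) \<circ> sh i) summable_on UNIV"
    by (subst summable_on_reindex[symmetric]) (simp_all add: inj_sh)
  thus ?thesis by (simp add: hardy_iff bsh_def o_def)
qed

definition delta :: "nat^'d::finite \<Rightarrow> (nat^'d) \<Rightarrow> complex" where
  "delta n = (\<lambda>m. if m = n then 1 else 0)"

lemma hardy_delta: "delta n \<in> hardy"
proof -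
  have "(\<lambda>m. (cmod (delta n m))\<^sup>2) summable_on UNIV \<longleftrightarrow> (\<lambda>m. (cmod (delta n m))\<^sup>2) summable_on {n}"
    by (rule summable_on_cong_neutral) (auto simp: delta_def)
  thus ?thesis by (simp add: hardy_iff)
qed

lemma inner_delta: "h2_inner u (delta n) = u n"
proof -
  have "h2_inner u (delta n) = (\<Sum>\<^sub>\<infinity>m\<in>{n}. u m * cnj (delta n m))"
    unfolding h2_inner_def by (rule infsum_cong_neutral) (auto simp: delta_def)
  thus ?thesis by (simp add: delta_def)
qed

lemma inner_unique:
  assumes "\<And>h. h \<in> hardy \<Longrightarrow> h2_inner u h = h2_inner v h"
  shows "u = v"
proof
  fix n show "u n = v n" using assms[OF hardy_delta[of n]] by (simp add: inner_delta)
qed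

theorem proposition7p4:
  fixes \<phi> :: "(real^'d::finite) \<Rightarrow> complex"
    and C :: "((nat^'d) \<Rightarrow> complex) \<Rightarrow> ((nat^'d) \<Rightarrow> complex)"
  assumes "CARD('d) \<ge> 2"
    and "Linfty \<phi>"
    and "conjugation C"
    and "C_symmetric C (toeplitz \<phi>)"
  shows "\<forall>i::'d. \<exists>S'. is_adjoint (\<lambda>f. C (mult_z i (C f))) S' \<and>
           (\<forall>f\<in>hardy. S' (toeplitz \<phi> (C (mult_z i (C f)))) = toeplitz \<phi> f)"
proof
  fix i :: 'd
  note C = assms(3)
  have Ch: "\<And>f. f \<in> hardy \<Longrightarrow> C f \<in> hardy" and CC: "\<And>f. f \<in> hardy \<Longrightarrow> C (C f) = f"
    using C by (auto simp: conjugation_def)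
  define T where "T = toeplitz \<phi>"
  obtain T' where adj: "is_adjoint T T'" and sym: "\<And>f. f \<in> hardy \<Longrightarrow> C (T' (C f)) = T f"
    using assms(4) unfolding C_symmetric_def T_def by blast
  have Th: "\<And>f. f \<in> hardy \<Longrightarrow> T f \<in> hardy" and T'h: "\<And>f. f \<in> hardy \<Longrightarrow> T' f \<in> hardy"
    and Tin: "\<And>f g. f \<in> hardy \<Longrightarrow> g \<in> hardy \<Longrightarrow> h2_inner (T f) g = h2_inner f (T' g)"
    using adj by (auto simp: is_adjoint_def)
  have CT: "C (T x) = T' (C x)" if x: "x \<in> hardy" for x
  proof -
    have "C (T x) = C (C (T' (C x)))" using sym[OF x] by simp
    also have "\<dots> = T' (C x)" by (rule CC[OF T'h[OF Ch[OF x]]])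
    finally show ?thesis .
  qed
  have T'shift: "bsh i (T' (mult_z i g)) = T' g" if g: "g \<in> hardy" for g
  proof (rule inner_unique)
    fix h :: "nat^'d \<Rightarrow> complex" assume h: "h \<in> hardy"
    have "h2_inner (bsh i (T' (mult_z i g))) h = h2_inner (T' (mult_z i g)) (mult_z i h)"
      by (rule inner_shift)
    also have "\<dots> = cnj (h2_inner (mult_z i h) (T' (mult_z i g)))" by (rule inner_sym)
    also have "\<dots> = cnj (h2_inner (T (mult_z i h)) (mult_z i g))"
      using Tin[OF hardy_mult_z[OF h] hardy_mult_z[OF g]] by simp
    also have "\<dots> = cnj (h2_inner (bsh i (T (mult_z i h))) g)" by (simp add: inner_shift)
    also have "\<dots> = cnj (h2_inner (T h) g)" by (simp add: T_def toeplitz_shift)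
    also have "\<dots> = cnj (h2_inner h (T' g))" using Tin[OF h g] by simp
    also have "\<dots> = h2_inner (T' g) h" by (simp add: inner_sym[of h])
    finally show "h2_inner (bsh i (T' (mult_z i g))) h = h2_inner (T' g) h" .
  qed
  show "\<exists>S'. is_adjoint (\<lambda>f. C (mult_z i (C f))) S' \<and>
           (\<forall>f\<in>hardy. S' (toeplitz \<phi> (C (mult_z i (C f)))) = toeplitz \<phi> f)"
  proof (intro exI conjI ballI)
    show "is_adjoint (\<lambda>f. C (mult_z i (C f))) (\<lambda>g. C (bsh i (C g)))"
      unfolding is_adjoint_def
    proof (intro conjI ballI)
      fix f :: "nat^'d \<Rightarrow> complex" assume f: "f \<in> hardy"
      show "C (mult_z i (C f)) \<in> hardy" by (intro Ch hardy_mult_z f)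
      show "C (bsh i (C f)) \<in> hardy" by (intro Ch hardy_bsh f)
    next
      fix f g :: "nat^'d \<Rightarrow> complex" assume f: "f \<in> hardy" and g: "g \<in> hardy"
      have "h2_inner (C (mult_z i (C f))) g = h2_inner (C (mult_z i (C f))) (C (C g))"
        by (simp add: CC[OF g])
      also have "\<dots> = h2_inner (C g) (mult_z i (C f))"
        by (rule conj_inner[OF C]) (intro hardy_mult_z Ch f, intro Ch g)
      also have "\<dots> = h2_inner (bsh i (C g)) (C f)" by (simp add: inner_shift)
      also have "\<dots> = h2_inner (C (C f)) (C (bsh i (C g)))"
        by (rule conj_inner[OF C, symmetric]) (intro Ch f, intro hardy_bsh Ch g)
      also have "\<dots> = h2_inner f (C (bsh i (C g)))" by (simp add: CC[OF f])
      finally show "h2_inner (C (mult_z i (C f))) g = h2_inner f (C (bsh i (C g)))" .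
    qed
  next
    fix f :: "nat^'d \<Rightarrow> complex" assume f: "f \<in> hardy"
    have g: "C f \<in> hardy" by (rule Ch[OF f])
    have Mg: "mult_z i (C f) \<in> hardy" by (rule hardy_mult_z[OF g])
    have "C (T (C (mult_z i (C f)))) = T' (C (C (mult_z i (C f))))" by (rule CT[OF Ch[OF Mg]])
    also have "\<dots> = T' (mult_z i (C f))" by (simp add: CC[OF Mg])
    finally have "C (bsh i (C (T (C (mult_z i (C f)))))) = C (bsh i (T' (mult_z i (C f))))" by simp
    also have "\<dots> = C (T' (C f))" by (simp add: T'shift[OF g])
    also have "\<dots> = T f" by (rule sym[OF f])
    finally show "C (bsh i (C (toeplitz \<phi> (C (mult_z i (C f)))))) = toeplitz \<phi> f"
      by (simp add: T_def)
  qed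
qed

end
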